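(* The ring $s'(\mathbb{Z}^d)$ (for any $d\ge1$) is a Hermite ring.
   Context: For $\mathbf{n}\in\mathbb{Z}^d$, $\|\mathbf{n}\|_1$ denotes the $1$-norm. $s'(\mathbb{Z}^d)$ is the set of all maps $\mathbf{a}:\mathbb{Z}^d\to\mathbb{C}$ for which there exist $M>0$ and $k\in\mathbb{N}$ with $|\mathbf{a}(\mathbf{n})|\le M(1+\|\mathbf{n}\|_1)^k$ for all $\mathbf{n}\in\mathbb{Z}^d$; it is a commutative unital ring under pointwise operations. For a commutative unital ring $R$, $U_N(R)$ denotes the set of $N$-tuples $(a_1,\dots,a_N)\in R^N$ for which there exist $b_1,\dots,b_N\in R$ with $b_1a_1+\cdots+b_Na_N=1$. $R$ is a Hermite ring if for every $N\in\mathbb{N}$ and every $(a_1,\dots,a_N)\in U_N(R)$ there exists a matrix $A\in R^{N\times N}$, invertible in $R^{N\times N}$, whose first column is $(a_1,\dots,a_N)^{\top}$, i.e. $A_{i1}=a_i$ for $i=1,\dots,N$. *)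

theory Defs
  imports Complex_Main "Jordan_Normal_Form.Matrix"
begin

definition unimodular :: "nat \<Rightarrow> 'a::comm_ring_1 vec \<Rightarrow> bool" where
  "unimodular N a \<longleftrightarrow> a \<in> carrier_vec N \<and>
     (\<exists>b \<in> carrier_vec N. (\<Sum>i<N. b $ i * a $ i) = 1)"

definition hermite_ring :: "'a::comm_ring_1 itself \<Rightarrow> bool" where
  "hermite_ring TYPE('a) \<longleftrightarrow>
     (\<forall>N. \<forall>a :: 'a vec. unimodular N a \<longrightarrow>
        (\<exists>A \<in> carrier_mat N N. invertible_mat A \<and> col A 0 = a))"

text \<open>Z^d is modelled as ('d => int) for a finite (nonempty) index type 'd, d = CARD('d) \<ge> 1.\<close>
definition norm1 :: "('d::finite \<Rightarrow> int) \<Rightarrow> int" where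
  "norm1 n = (\<Sum>i\<in>UNIV. \<bar>n i\<bar>)"

definition slow_growth :: "(('d::finite \<Rightarrow> int) \<Rightarrow> complex) set" where
  "slow_growth = {a. \<exists>M>0. \<exists>k::nat. \<forall>n. cmod (a n) \<le> M * (1 + real_of_int (norm1 n)) ^ k}"

typedef (overloaded) 'd sprime = "slow_growth :: (('d::finite \<Rightarrow> int) \<Rightarrow> complex) set"
  morphisms sp_fun Abs_sprime
proof
  show "(\<lambda>_. 0) \<in> slow_growth" unfolding slow_growth_def
    by (rule CollectI, rule exI[of _ 1]) (auto intro!: exI[of _ 0])
qed

setup_lifting type_definition_sprime

lemma norm1_nonneg: "0 \<le> norm1 n"
  unfolding norm1_def by (simp add: sum_nonneg)

lemma base_ge1: "1 \<le> 1 + real_of_int (norm1 n)"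
  using norm1_nonneg[of n] by simp

lemma const_in: "(\<lambda>_. c) \<in> slow_growth"
  unfolding slow_growth_def
  by (rule CollectI, rule exI[of _ "cmod c + 1"]) (auto intro!: exI[of _ 0] add_nonneg_pos)

lemma pow_mono_base:
  fixes x :: real assumes "1 \<le> x" "k \<le> m" shows "x ^ k \<le> x ^ m"
  using assms by (simp add: power_increasing)

lemma add_in:
  assumes "a \<in> slow_growth" "b \<in> slow_growth"
  shows "(\<lambda>n. a n + b n) \<in> slow_growth"
proof -
  from assms obtain M1 k1 M2 k2 where M1: "M1 > 0" and b1: "\<forall>n. cmod (a n) \<le> M1 * (1 + real_of_int (norm1 n)) ^ k1"
    and M2: "M2 > 0" and b2: "\<forall>n. cmod (b n) \<le> M2 * (1 + real_of_int (norm1 n)) ^ k2"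
    unfolding slow_growth_def by blast
  have "cmod (a n + b n) \<le> (M1 + M2) * (1 + real_of_int (norm1 n)) ^ (k1 + k2)" for n
  proof -
    let ?x = "1 + real_of_int (norm1 n)"
    have x: "1 \<le> ?x" by (rule base_ge1)
    have "cmod (a n + b n) \<le> cmod (a n) + cmod (b n)" by (rule norm_triangle_ineq)
    also have "\<dots> \<le> M1 * ?x ^ k1 + M2 * ?x ^ k2" using b1 b2 by (meson add_mono)
    also have "\<dots> \<le> M1 * ?x ^ (k1+k2) + M2 * ?x ^ (k1+k2)"
      using M1 M2 x by (intro add_mono mult_left_mono pow_mono_base) auto
    finally show ?thesis by (simp add: distrib_right)
  qed
  thus ?thesis unfolding slow_growth_def using M1 M2
    by (intro CollectI exI[of _ "M1+M2"]) auto
qed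

lemma mult_in:
  assumes "a \<in> slow_growth" "b \<in> slow_growth"
  shows "(\<lambda>n. a n * b n) \<in> slow_growth"
proof -
  from assms obtain M1 k1 M2 k2 where M1: "M1 > 0" and b1: "\<forall>n. cmod (a n) \<le> M1 * (1 + real_of_int (norm1 n)) ^ k1"
    and M2: "M2 > 0" and b2: "\<forall>n. cmod (b n) \<le> M2 * (1 + real_of_int (norm1 n)) ^ k2"
    unfolding slow_growth_def by blast
  have "cmod (a n * b n) \<le> (M1 * M2) * (1 + real_of_int (norm1 n)) ^ (k1 + k2)" for n
  proof -
    let ?x = "1 + real_of_int (norm1 n)"
    have "cmod (a n * b n) = cmod (a n) * cmod (b n)" by (simp add: norm_mult)
    also have "\<dots> \<le> (M1 * ?x ^ k1) * (M2 * ?x ^ k2)"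
      using b1 b2 M1 base_ge1[of n] by (intro mult_mono) auto
    finally show ?thesis by (simp add: power_add algebra_simps)
  qed
  thus ?thesis unfolding slow_growth_def using M1 M2
    by (intro CollectI exI[of _ "M1*M2"]) auto
qed

lemma uminus_in:
  assumes "a \<in> slow_growth" shows "(\<lambda>n. - a n) \<in> slow_growth"
  using assms unfolding slow_growth_def by simp

instantiation sprime :: (finite) comm_ring_1
begin
lift_definition zero_sprime :: "'a sprime" is "\<lambda>_. 0" by (rule const_in)
lift_definition one_sprime :: "'a sprime" is "\<lambda>_. 1" by (rule const_in)
lift_definition plus_sprime :: "'a sprime \<Rightarrow> 'a sprime \<Rightarrow> 'a sprime" is "\<lambda>a b n. a n + b n"
  by (rule add_in)
lift_definition times_sprime :: "'a sprime \<Rightarrow> 'a sprime \<Rightarrow> 'a sprime" is "\<lambda>a b n. a n * b n"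
  by (rule mult_in)
lift_definition uminus_sprime :: "'a sprime \<Rightarrow> 'a sprime" is "\<lambda>a n. - a n"
  by (rule uminus_in)
lift_definition minus_sprime :: "'a sprime \<Rightarrow> 'a sprime \<Rightarrow> 'a sprime" is "\<lambda>a b n. a n - b n"
proof -
  fix a b :: "('a \<Rightarrow> int) \<Rightarrow> complex"
  assume "a \<in> slow_growth" "b \<in> slow_growth"
  then have "(\<lambda>n. a n + (- b n)) \<in> slow_growth" by (intro add_in uminus_in)
  thus "(\<lambda>n. a n - b n) \<in> slow_growth" by simp
qed
instance
  by standard (transfer; auto simp: algebra_simps fun_eq_iff)+
end

end

theory Submission imports Defs begin

lemma sum_rank1:
  fixes u c :: "nat \<Rightarrow> 'a::comm_ring_1"
  assumes t: "(\<Sum>k<N. c k * u k) = t" and x: "x * (1 + t) = 1" and i: "i < N" and j: "j < N"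
  shows "(\<Sum>k<N. ((if i = k then 1 else 0) + u i * c k) * ((if k = j then 1 else 0) - x * u k * c j))
          = (if i = j then 1 else 0)"
proof -
  have "(\<Sum>k<N. ((if i = k then 1 else 0) + u i * c k) * ((if k = j then 1 else 0) - x * u k * c j))
    = (\<Sum>k<N. (if i = k then (if k = j then 1 else 0) else 0) - (if i = k then x * u k * c j else 0)
      + (if k = j then u i * c k else 0) - x * u i * c j * (c k * u k))"
    by (rule sum.cong) (auto simp: algebra_simps)
  also have "\<dots> = (\<Sum>k<N. (if i = k then (if k = j then 1 else 0) else 0)) - (\<Sum>k<N. (if i = k then x * u k * c j else 0))
      + (\<Sum>k<N. (if k = j then u i * c k else 0)) - x * u i * c j * (\<Sum>k<N. c k * u k)"
    by (simp add: sum.distrib sum_subtractf sum_distrib_left)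
  also have "\<dots> = (if i = j then 1 else 0) - x * u i * c j + u i * c j - x * u i * c j * t"
    using i j t by (simp add: sum.delta sum.delta')
  also have "\<dots> = (if i = j then 1 else 0) + u i * c j * (1 - x * (1 + t))"
    by (simp add: algebra_simps)
  finally show ?thesis using x by simp
qed

lemma sum_rank1':
  fixes u c :: "nat \<Rightarrow> 'a::comm_ring_1"
  assumes t: "(\<Sum>k<N. c k * u k) = t" and x: "x * (1 + t) = 1" and i: "i < N" and j: "j < N"
  shows "(\<Sum>k<N. ((if i = k then 1 else 0) - x * u i * c k) * ((if k = j then 1 else 0) + u k * c j))
          = (if i = j then 1 else 0)"
proof -
  have "(\<Sum>k<N. ((if i = k then 1 else 0) - x * u i * c k) * ((if k = j then 1 else 0) + u k * c j))
    = (\<Sum>k<N. (if i = k then (if k = j then 1 else 0) else 0) + (if i = k then u k * c j else 0)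
      - (if k = j then x * u i * c k else 0) - x * u i * c j * (c k * u k))"
    by (rule sum.cong) (auto simp: algebra_simps)
  also have "\<dots> = (\<Sum>k<N. (if i = k then (if k = j then 1 else 0) else 0)) + (\<Sum>k<N. (if i = k then u k * c j else 0))
      - (\<Sum>k<N. (if k = j then x * u i * c k else 0)) - x * u i * c j * (\<Sum>k<N. c k * u k)"
    by (simp add: sum.distrib sum_subtractf sum_distrib_left)
  also have "\<dots> = (if i = j then 1 else 0) + u i * c j - x * u i * c j - x * u i * c j * t"
    using i j t by (simp add: sum.delta sum.delta')
  also have "\<dots> = (if i = j then 1 else 0) + u i * c j * (1 - x * (1 + t))"
    by (simp add: algebra_simps)
  finally show ?thesis using x by simp
qed

lemma completion:
  fixes a c :: "'a::comm_ring_1 vec"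
  assumes a: "a \<in> carrier_vec N" and N: "0 < N" and c0: "c $ 0 = 1"
    and x: "x * (\<Sum>k<N. c $ k * a $ k) = 1"
  shows "\<exists>A \<in> carrier_mat N N. invertible_mat A \<and> col A 0 = a"
proof -
  define u where "u k = a $ k - (if k = 0 then 1 else 0)" for k
  define cc where "cc k = c $ k" for k
  define t where "t = (\<Sum>k<N. cc k * u k)"
  have "(\<Sum>k<N. c $ k * a $ k) = (\<Sum>k<N. cc k * u k + (if k = 0 then c $ k else 0))"
    by (rule sum.cong) (auto simp: u_def cc_def algebra_simps)
  also have "\<dots> = t + 1" using N c0 by (simp add: sum.distrib t_def sum.delta')
  finally have x1: "x * (1 + t) = 1" using x by (simp add: add.commute)
  define A where "A = mat N N (\<lambda>(i,j). (if i = j then 1 else 0) + u i * cc j)"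
  define B where "B = mat N N (\<lambda>(i,j). (if i = j then 1 else 0) - x * u i * cc j)"
  have AB: "A * B = 1\<^sub>m N"
  proof (rule eq_matI)
    fix i j assume i: "i < dim_row (1\<^sub>m N :: 'a mat)" and j: "j < dim_col (1\<^sub>m N :: 'a mat)"
    hence i: "i < N" and j: "j < N" by auto
    have "(A * B) $$ (i, j) = (\<Sum>k\<in>{0..<N}. A $$ (i,k) * B $$ (k,j))"
      using i j by (simp add: A_def B_def scalar_prod_def)
    also have "\<dots> = (\<Sum>k<N. ((if i = k then 1 else 0) + u i * cc k) * ((if k = j then 1 else 0) - x * u k * cc j))"
      using i j by (auto simp: A_def B_def lessThan_atLeast0 intro!: sum.cong)
    also have "\<dots> = (if i = j then 1 else 0)"
      by (rule sum_rank1[OF t_def[symmetric] x1 i j])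
    finally show "(A * B) $$ (i, j) = 1\<^sub>m N $$ (i, j)" using i j by simp
  qed (auto simp: A_def B_def)
  have BA: "B * A = 1\<^sub>m N"
  proof (rule eq_matI)
    fix i j assume i: "i < dim_row (1\<^sub>m N :: 'a mat)" and j: "j < dim_col (1\<^sub>m N :: 'a mat)"
    hence i: "i < N" and j: "j < N" by auto
    have "(B * A) $$ (i, j) = (\<Sum>k\<in>{0..<N}. B $$ (i,k) * A $$ (k,j))"
      using i j by (simp add: A_def B_def scalar_prod_def)
    also have "\<dots> = (\<Sum>k<N. ((if i = k then 1 else 0) - x * u i * cc k) * ((if k = j then 1 else 0) + u k * cc j))"
      using i j by (auto simp: A_def B_def lessThan_atLeast0 intro!: sum.cong)
    also have "\<dots> = (if i = j then 1 else 0)"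
      by (rule sum_rank1'[OF t_def[symmetric] x1 i j])
    finally show "(B * A) $$ (i, j) = 1\<^sub>m N $$ (i, j)" using i j by simp
  qed (auto simp: A_def B_def)
  have "A \<in> carrier_mat N N" by (simp add: A_def)
  moreover have "invertible_mat A"
    unfolding invertible_mat_def inverts_mat_def using AB BA
    by (auto simp: A_def B_def square_mat.simps intro!: exI[of _ B])
  moreover have "col A 0 = a"
    using a N c0 by (auto simp: A_def u_def cc_def)
  ultimately show ?thesis by blast
qed


lemma sp_fun_plus: "sp_fun (x + y) n = sp_fun x n + sp_fun y n" by transfer simp
lemma sp_fun_times: "sp_fun (x * y) n = sp_fun x n * sp_fun y n" by transfer simp
lemma sp_fun_one: "sp_fun 1 n = 1" by transfer simp
lemma sp_fun_zero: "sp_fun 0 n = 0" by transfer simp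

lemma sp_fun_sum: "sp_fun (\<Sum>i\<in>A. f i) n = (\<Sum>i\<in>A. sp_fun (f i) n)"
  by (induction A rule: infinite_finite_induct) (auto simp: sp_fun_zero sp_fun_plus)

lemma dominated_in:
  assumes "f \<in> slow_growth" "\<And>n. cmod (g n) \<le> cmod (f n)"
  shows "g \<in> slow_growth"
  using assms unfolding slow_growth_def by (blast intro: order_trans)

lemma sum_in:
  assumes "\<And>i. i \<in> A \<Longrightarrow> f i \<in> slow_growth"
  shows "(\<lambda>n. \<Sum>i\<in>A. f i n) \<in> slow_growth"
  using assms
proof (induction A rule: infinite_finite_induct)
  case (infinite A) then show ?case using const_in[of 0] by simp
next
  case empty then show ?case using const_in[of 0] by simp
next
  case (insert x F)
  then show ?case by (simp add: add_in)
qed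

lemma key_ineq:
  fixes F G :: "nat \<Rightarrow> complex"
  assumes sum1: "(\<Sum>i<N. G i * F i) = 1"
  defines "B \<equiv> 1 + (\<Sum>i<N. cmod (G i))"
  defines "T \<equiv> cmod (F 0) + (\<Sum>i\<in>{1..<N}. (cmod (F i))^2)"
  shows "1 / B^2 \<le> T"
proof (rule ccontr)
  assume "\<not> 1 / B^2 \<le> T"
  hence TB: "T < 1 / B^2" by simp
  have B1: "1 \<le> B" unfolding B_def by (simp add: sum_nonneg)
  have Bpos: "0 < B" using B1 by simp
  have S0: "0 \<le> (\<Sum>i\<in>{1..<N}. (cmod (F i))^2)" by (simp add: sum_nonneg)
  have BB2: "B * 1 \<le> B * B" using B1 by (intro mult_left_mono) auto
  have BB: "1 / B^2 \<le> 1 / B"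
    by (rule divide_left_mono) (use BB2 Bpos in \<open>auto simp: power2_eq_square\<close>)
  have small: "cmod (F i) \<le> 1 / B" if "i < N" for i
  proof (cases "i = 0")
    case True
    have "cmod (F 0) \<le> T" unfolding T_def using S0 by linarith
    hence "cmod (F i) \<le> T" using True by simp
    then show ?thesis using TB BB by linarith
  next
    case False
    then have "i \<in> {1..<N}" using that by auto
    hence "(cmod (F i))^2 \<le> (\<Sum>i\<in>{1..<N}. (cmod (F i))^2)"
      by (intro member_le_sum) auto
    also have "\<dots> < 1/B^2" using TB norm_ge_zero[of "F 0"] unfolding T_def by linarith
    also have "\<dots> = (1/B)^2" by (rule power_one_over[symmetric])
    finally have "(cmod (F i))^2 < (1/B)^2" .
    hence "cmod (F i) < 1/B" by (rule power_less_imp_less_base) (use Bpos in simp)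
    thus ?thesis by (rule less_imp_le)
  qed
  have "1 = cmod (\<Sum>i<N. G i * F i)" using sum1 by simp
  also have "\<dots> \<le> (\<Sum>i<N. cmod (G i) * cmod (F i))"
    by (rule order_trans[OF norm_sum]) (simp add: norm_mult)
  also have "\<dots> \<le> (\<Sum>i<N. cmod (G i) * (1 / B))"
    by (intro sum_mono mult_left_mono small) auto
  also have "\<dots> = (\<Sum>i<N. cmod (G i)) / B" by (simp add: sum_divide_distrib)
  also have "\<dots> = (B - 1) / B" unfolding B_def by simp
  also have "\<dots> < 1" using Bpos by (simp add: divide_less_eq)
  finally show False by simp
qed

lemma s_eq:
  fixes F :: "nat \<Rightarrow> complex"
  assumes N: "0 < N"
  defines "w \<equiv> (if F 0 = 0 then 1 else sgn (F 0))"
  shows "cmod (\<Sum>i<N. (if i = 0 then 1 else w * cnj (F i)) * F i)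
         = cmod (F 0) + (\<Sum>i\<in>{1..<N}. (cmod (F i))^2)"
proof -
  have w1: "cmod w = 1" by (simp add: w_def norm_sgn)
  have F0: "F 0 = w * of_real (cmod (F 0))"
    by (cases "F 0 = 0") (simp_all add: w_def sgn_eq)
  have split: "{..<N} = insert 0 {1..<N}" using N by auto
  define R where "R = cmod (F 0) + (\<Sum>i\<in>{1..<N}. (cmod (F i))^2)"
  have R0: "0 \<le> R" unfolding R_def by (simp add: sum_nonneg)
  have "(\<Sum>i<N. (if i = 0 then 1 else w * cnj (F i)) * F i)
        = F 0 + (\<Sum>i\<in>{1..<N}. w * of_real ((cmod (F i))^2))"
    unfolding split by (simp add: complex_norm_square[symmetric] algebra_simps del: of_real_power)
  also have "\<dots> = w * of_real R"
    unfolding R_def by (subst F0) (simp add: sum_distrib_left[symmetric] distrib_left)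
  finally have "cmod (\<Sum>i<N. (if i = 0 then 1 else w * cnj (F i)) * F i) = cmod (w * of_real R)" by simp
  also have "\<dots> = R" using w1 R0 by (simp only: norm_mult norm_of_real)
  finally show ?thesis unfolding R_def .
qed

theorem corollary1p6:
  shows "hermite_ring TYPE('d::finite sprime)"
  unfolding hermite_ring_def
proof (intro allI impI)
  fix N and a :: "'d sprime vec"
  assume "unimodular N a"
  then obtain b where a: "a \<in> carrier_vec N" and b: "b \<in> carrier_vec N"
    and ba: "(\<Sum>i<N. b $ i * a $ i) = 1" unfolding unimodular_def by blast
  define F where "F i n = sp_fun (a $ i) n" for i n
  define G where "G i n = sp_fun (b $ i) n" for i n
  have pw: "(\<Sum>i<N. G i n * F i n) = 1" for n
  proof -
    have "sp_fun (\<Sum>i<N. b $ i * a $ i) n = sp_fun 1 n" using ba by simp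
    thus ?thesis by (simp add: sp_fun_sum sp_fun_times sp_fun_one F_def G_def)
  qed
  have N: "0 < N"
  proof (rule ccontr)
    assume "\<not> 0 < N" hence "N = 0" by simp
    with pw[of undefined] show False by simp
  qed
  have Fin: "F i \<in> slow_growth" for i unfolding F_def[abs_def] using sp_fun by auto
  have Gin: "G i \<in> slow_growth" for i unfolding G_def[abs_def] using sp_fun by auto
  define w where "w n = (if F 0 n = 0 then 1 else sgn (F 0 n))" for n
  define cf where "cf i n = (if i = 0 then 1 else w n * cnj (F i n))" for i n
  have cfin: "cf i \<in> slow_growth" for i
  proof (cases "i = 0")
    case True then show ?thesis using const_in[of 1] by (simp add: cf_def[abs_def])
  next
    case False
    show ?thesis
    proof (rule dominated_in[OF Fin[of i]])
      fix n show "cmod (cf i n) \<le> cmod (F i n)"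
        using False by (simp add: cf_def w_def norm_mult norm_sgn)
    qed
  qed
  define c where "c = vec N (\<lambda>i. Abs_sprime (cf i))"
  have "sp_fun (c $ 0) = sp_fun 1" using N
    by (simp add: c_def Abs_sprime_inverse[OF cfin] cf_def fun_eq_iff sp_fun_one)
  hence c0: "c $ 0 = 1" by (simp add: sp_fun_inject)
  define s where "s n = (\<Sum>i<N. cf i n * F i n)" for n
  define Bf where "Bf n = 1 + (\<Sum>i<N. cmod (G i n))" for n
  have Bf1: "1 \<le> Bf n" for n unfolding Bf_def by (simp add: sum_nonneg)
  have sB: "1 / (Bf n)^2 \<le> cmod (s n)" for n
  proof -
    have "cmod (s n) = cmod (F 0 n) + (\<Sum>i\<in>{1..<N}. (cmod (F i n))^2)"
      unfolding s_def cf_def w_def using s_eq[OF N, of "\<lambda>i. F i n"] by simp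
    moreover have "1 / (Bf n)^2 \<le> cmod (F 0 n) + (\<Sum>i\<in>{1..<N}. (cmod (F i n))^2)"
      unfolding Bf_def by (rule key_ineq) (use pw in simp)
    ultimately show ?thesis by simp
  qed
  have snz: "s n \<noteq> 0" for n
  proof
    assume "s n = 0"
    with sB[of n] have "1 / (Bf n)^2 \<le> 0" by simp
    with Bf1[of n] show False by (simp add: divide_simps)
  qed
  define xf where "xf n = 1 / s n" for n
  have Gn: "(\<lambda>n. complex_of_real (cmod (G i n))) \<in> slow_growth" for i
    by (rule dominated_in[OF Gin[of i]]) simp
  have Bin: "(\<lambda>n. complex_of_real (Bf n)) \<in> slow_growth"
  proof -
    have "(\<lambda>n. (1::complex) + (\<Sum>i<N. complex_of_real (cmod (G i n)))) \<in> slow_growth"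
      using Gn by (intro add_in const_in sum_in) simp
    thus ?thesis by (simp add: Bf_def)
  qed
  have xin: "xf \<in> slow_growth"
  proof (rule dominated_in[OF mult_in[OF Bin Bin]])
    fix n
    have pos: "0 < cmod (s n)" using snz by simp
    have "cmod (xf n) = 1 / cmod (s n)" by (simp add: xf_def norm_divide)
    also have "\<dots> \<le> (Bf n)^2" using sB[of n] pos Bf1[of n]
      by (simp add: divide_simps mult.commute)
    also have "\<dots> = cmod (complex_of_real (Bf n) * complex_of_real (Bf n))"
      using Bf1[of n] by (simp add: norm_mult power2_eq_square)
    finally show "cmod (xf n) \<le> cmod (complex_of_real (Bf n) * complex_of_real (Bf n))" .
  qed
  define x where "x = Abs_sprime xf"
  have "x * (\<Sum>k<N. c $ k * a $ k) = 1"
  proof (rule sp_fun_inject[THEN iffD1], rule ext)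
    fix n
    have "sp_fun (x * (\<Sum>k<N. c $ k * a $ k)) n = xf n * (\<Sum>k<N. sp_fun (c $ k) n * F k n)"
      by (simp add: sp_fun_times sp_fun_sum x_def Abs_sprime_inverse[OF xin] F_def)
    also have "(\<Sum>k<N. sp_fun (c $ k) n * F k n) = s n"
      unfolding s_def by (rule sum.cong) (auto simp: c_def Abs_sprime_inverse[OF cfin])
    finally show "sp_fun (x * (\<Sum>k<N. c $ k * a $ k)) n = sp_fun 1 n"
      using snz[of n] by (simp add: xf_def sp_fun_one)
  qed
  thus "\<exists>A\<in>carrier_mat N N. invertible_mat A \<and> col A 0 = a"
    by (rule completion[OF a N c0])
qed

end
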